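(* Let $\Omega$ be a finite set with $|\Omega|\ge2$ and $0<\varepsilon<1/2$. There is $n_0=n_0(\varepsilon,\Omega)$ such that the following holds for all $n>n_0$. Let $\mu\in\mathcal P(\Omega^n)$ and let $S_1,\dots,S_l\subset\Omega^n$ be pairwise disjoint sets such that (i) $\sum_{i=1}^l\mu(S_i)>1-\varepsilon$, and (ii) $\mu(S_i)>0$ and the conditional distribution $\mu[\cdot|S_i]$ is $(\varepsilon/9)^3$-symmetric for each $1\le i\le l$. Let $z=\sum_{h=1}^l\mu(S_h)$. Then $D_\square\Big(\mu,\ \frac1z\sum_{i=1}^l\mu(S_i)\bigotimes_{j=1}^n\mu_j[\cdot|S_i]\Big)<2\varepsilon$.
   Context: $\mathcal P(\mathcal X)$ denotes the set of probability measures on a finite set $\mathcal X$; $[n]=\{1,\dots,n\}$; $\|p-q\|_{TV}=\frac12\sum_x|p(x)-q(x)|$. For $\mu\in\mathcal P(\Omega^n)$, $\mu_j$ and $\mu_{i,j}$ denote the marginals on coordinate $j$ and coordinates $\{i,j\}$; $\mu_j[\cdot|S]$ is the $j$-th marginal of the conditional measure $\mu[\cdot|S]$. $\mu\in\mathcal P(\Omega^V)$ is $\varepsilon$-symmetric if $\frac1{|V|^2}\sum_{i,j\in V,\,i\ne j}\|\mu_{i,j}-\mu_i\otimes\mu_j\|_{TV}<\varepsilon$. For $\mu,\nu\in\mathcal P(\Omega^n)$ let $\Gamma(\mu,\nu)$ be the set of couplings, i.e. probability measures $\gamma$ on $\Omega^n\times\Omega^n$ whose first and second marginals are $\mu$ and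 $\nu$. The cut metric is $D_\square(\mu,\nu)=\frac1n\min_{\gamma\in\Gamma(\mu,\nu)}\max_{I\subset[n],\,B\subset\Omega^n\times\Omega^n,\,\omega\in\Omega}\Big|\sum_{i\in I}\sum_{(\sigma,\tau)\in B}\gamma(\sigma,\tau)\big(\mathbf 1\{\sigma_i=\omega\}-\mathbf 1\{\tau_i=\omega\}\big)\Big|$. *)

theory Defs
  imports "HOL-Analysis.Analysis"
begin

text \<open>Configurations in Omega^n are lists of length n over a finite type 'a;
 coordinates are indexed 0..n-1. A measure on Omega^n is a real function on lists
 supported on lists of length n.\<close>

definition config :: "nat \<Rightarrow> 'a list set" where
  "config n = {\<sigma>. length \<sigma> = n}"

definition is_prob :: "nat \<Rightarrow> ('a list \<Rightarrow> real) \<Rightarrow> bool" where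
  "is_prob n \<mu> \<longleftrightarrow> (\<forall>\<sigma>. 0 \<le> \<mu> \<sigma>) \<and> (\<forall>\<sigma>. length \<sigma> \<noteq> n \<longrightarrow> \<mu> \<sigma> = 0)
      \<and> (\<Sum>\<sigma>\<in>config n. \<mu> \<sigma>) = 1"

definition msr :: "nat \<Rightarrow> ('a list \<Rightarrow> real) \<Rightarrow> 'a list set \<Rightarrow> real" where
  "msr n \<mu> S = (\<Sum>\<sigma>\<in>S \<inter> config n. \<mu> \<sigma>)"

definition cond :: "nat \<Rightarrow> ('a list \<Rightarrow> real) \<Rightarrow> 'a list set \<Rightarrow> 'a list \<Rightarrow> real" where
  "cond n \<mu> S \<sigma> = (if \<sigma> \<in> S \<inter> config n then \<mu> \<sigma> / msr n \<mu> S else 0)"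

definition marg1 :: "nat \<Rightarrow> ('a list \<Rightarrow> real) \<Rightarrow> nat \<Rightarrow> 'a \<Rightarrow> real" where
  "marg1 n \<mu> j \<omega> = (\<Sum>\<sigma>\<in>config n. if \<sigma> ! j = \<omega> then \<mu> \<sigma> else 0)"

definition marg2 :: "nat \<Rightarrow> ('a list \<Rightarrow> real) \<Rightarrow> nat \<Rightarrow> nat \<Rightarrow> 'a \<times> 'a \<Rightarrow> real" where
  "marg2 n \<mu> i j p = (\<Sum>\<sigma>\<in>config n. if \<sigma> ! i = fst p \<and> \<sigma> ! j = snd p then \<mu> \<sigma> else 0)"

definition tv :: "('b::finite \<Rightarrow> real) \<Rightarrow> ('b \<Rightarrow> real) \<Rightarrow> real" where
  "tv p q = (1/2) * (\<Sum>x\<in>UNIV. \<bar>p x - q x\<bar>)"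

definition eps_symmetric :: "nat \<Rightarrow> ('a::finite list \<Rightarrow> real) \<Rightarrow> real \<Rightarrow> bool" where
  "eps_symmetric n \<mu> \<epsilon> \<longleftrightarrow>
     (1 / (real n)^2) * (\<Sum>i\<in>{..<n}. \<Sum>j\<in>{..<n} - {i}.
        tv (marg2 n \<mu> i j) (\<lambda>p. marg1 n \<mu> i (fst p) * marg1 n \<mu> j (snd p))) < \<epsilon>"

definition prodm :: "nat \<Rightarrow> (nat \<Rightarrow> 'a \<Rightarrow> real) \<Rightarrow> 'a list \<Rightarrow> real" where
  "prodm n ps \<sigma> = (if length \<sigma> = n then (\<Prod>j<n. ps j (\<sigma> ! j)) else 0)"

definition couplings :: "nat \<Rightarrow> ('a list \<Rightarrow> real) \<Rightarrow> ('a list \<Rightarrow> real)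
    \<Rightarrow> ('a list \<times> 'a list \<Rightarrow> real) set" where
  "couplings n \<mu> \<nu> = {\<gamma>. (\<forall>x. 0 \<le> \<gamma> x)
      \<and> (\<forall>x. x \<notin> config n \<times> config n \<longrightarrow> \<gamma> x = 0)
      \<and> (\<forall>\<sigma>\<in>config n. (\<Sum>\<tau>\<in>config n. \<gamma> (\<sigma>, \<tau>)) = \<mu> \<sigma>)
      \<and> (\<forall>\<tau>\<in>config n. (\<Sum>\<sigma>\<in>config n. \<gamma> (\<sigma>, \<tau>)) = \<nu> \<tau>)}"

definition cut_val :: "nat \<Rightarrow> ('a::finite list \<times> 'a list \<Rightarrow> real) \<Rightarrow> real" where
  "cut_val n \<gamma> = Max {\<bar>\<Sum>i\<in>I. \<Sum>x\<in>B. \<gamma> x *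
        ((if fst x ! i = \<omega> then 1 else 0) - (if snd x ! i = \<omega> then 1 else 0))\<bar> |
      I B \<omega>. I \<subseteq> {..<n} \<and> B \<subseteq> config n \<times> config n}"

text \<open>Cut metric; the minimum over couplings is attained (compact polytope,
 continuous objective), so it equals the infimum.\<close>
definition cut_dist :: "nat \<Rightarrow> ('a::finite list \<Rightarrow> real) \<Rightarrow> ('a list \<Rightarrow> real) \<Rightarrow> real" where
  "cut_dist n \<mu> \<nu> = (1 / real n) * (INF \<gamma>\<in>couplings n \<mu> \<nu>. cut_val n \<gamma>)"

end

theory Submission
  imports Defs
begin

lemma finite_config: "finite (config n :: 'a::finite list set)"
proof -
  have "config n = {xs :: 'a list. set xs \<subseteq> UNIV \<and> length xs = n}" by (auto simp: config_def)
  thus ?thesis using finite_lists_length_eq[of "UNIV :: 'a set" n] by simp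
qed

lemma config_Suc: "config (Suc n) = (\<lambda>(xs,x). xs @ [x]) ` (config n \<times> UNIV)"
proof
  show "config (Suc n) \<subseteq> (\<lambda>(xs,x). xs @ [x]) ` (config n \<times> UNIV)"
  proof
    fix ys assume "ys \<in> config (Suc n)"
    hence l: "length ys = Suc n" by (simp add: config_def)
    hence "ys = butlast ys @ [last ys]" by (metis append_butlast_last_id list.size(3) nat.distinct(1) l)
    moreover have "butlast ys \<in> config n" using l by (simp add: config_def)
    ultimately show "ys \<in> (\<lambda>(xs,x). xs @ [x]) ` (config n \<times> UNIV)" by force
  qed
qed (auto simp: config_def)

lemma prod_sum_config:
  fixes h :: "nat \<Rightarrow> 'a::finite \<Rightarrow> real"
  shows "(\<Sum>\<sigma>\<in>config n. \<Prod>j<n. h j (\<sigma>!j)) = (\<Prod>j<n. \<Sum>a\<in>UNIV. h j a)"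
proof (induction n)
  case 0
  have "config 0 = {[]::'a list}" by (auto simp: config_def)
  thus ?case by simp
next
  case (Suc n)
  have inj: "inj_on (\<lambda>(xs::'a list,x::'a). xs @ [x]) (config n \<times> UNIV)"
    by (auto simp: inj_on_def)
  have "(\<Sum>\<sigma>\<in>config (Suc n). \<Prod>j<Suc n. h j (\<sigma>!j))
      = (\<Sum>p\<in>config n \<times> UNIV. \<Prod>j<Suc n. h j (((\<lambda>(xs,x). xs @ [x]) p)!j))"
    unfolding config_Suc by (rule sum.reindex[OF inj, unfolded comp_def])
  also have "\<dots> = (\<Sum>p\<in>config n \<times> UNIV. (\<Prod>j<n. h j (fst p ! j)) * h n (snd p))"
  proof (rule sum.cong[OF refl])
    fix p :: "'a list \<times> 'a" assume "p \<in> config n \<times> UNIV"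
    hence l: "length (fst p) = n" by (auto simp: config_def)
    have "(\<Prod>j<Suc n. h j (((\<lambda>(xs,x). xs @ [x]) p)!j)) = (\<Prod>j<n. h j ((fst p @ [snd p])!j)) * h n ((fst p @ [snd p])!n)"
      by (simp add: case_prod_beta)
    also have "\<dots> = (\<Prod>j<n. h j (fst p ! j)) * h n (snd p)"
      using l by (simp add: nth_append)
    finally show "(\<Prod>j<Suc n. h j (((\<lambda>(xs,x). xs @ [x]) p)!j)) = (\<Prod>j<n. h j (fst p ! j)) * h n (snd p)" .
  qed
  also have "\<dots> = (\<Sum>xs\<in>config n. \<Sum>x\<in>UNIV. (\<Prod>j<n. h j (xs ! j)) * h n x)"
    by (simp add: sum.cartesian_product case_prod_beta)
  also have "\<dots> = (\<Sum>xs\<in>config n. (\<Prod>j<n. h j (xs ! j))) * (\<Sum>x\<in>UNIV. h n x)"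
    by (simp add: sum_product)
  also have "\<dots> = (\<Prod>j<Suc n. \<Sum>a\<in>UNIV. h j a)" using Suc by simp
  finally show ?case .
qed

lemma prodm_gen:
  fixes ps :: "nat \<Rightarrow> 'a::finite \<Rightarrow> real"
  shows "(\<Sum>\<sigma>\<in>config n. prodm n ps \<sigma> * (\<Prod>i<n. f i (\<sigma>!i))) = (\<Prod>i<n. \<Sum>a\<in>UNIV. ps i a * f i a)"
proof -
  have "(\<Sum>\<sigma>\<in>config n. prodm n ps \<sigma> * (\<Prod>i<n. f i (\<sigma>!i))) = (\<Sum>\<sigma>\<in>config n. \<Prod>i<n. ps i (\<sigma>!i) * f i (\<sigma>!i))"
    by (rule sum.cong) (auto simp: prodm_def config_def prod.distrib)
  also have "\<dots> = (\<Prod>i<n. \<Sum>a\<in>UNIV. ps i a * f i a)" by (rule prod_sum_config)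
  finally show ?thesis .
qed

lemma prodm_one:
  fixes ps :: "nat \<Rightarrow> 'a::finite \<Rightarrow> real"
  assumes "\<forall>j<n. (\<Sum>a\<in>UNIV. ps j a) = 1" and "j < n"
  shows "(\<Sum>\<sigma>\<in>config n. prodm n ps \<sigma> * u (\<sigma>!j)) = (\<Sum>a\<in>UNIV. ps j a * u a)"
proof -
  have "(\<Sum>\<sigma>\<in>config n. prodm n ps \<sigma> * u (\<sigma>!j)) = (\<Sum>\<sigma>\<in>config n. prodm n ps \<sigma> * (\<Prod>i<n. (\<lambda>i a. if i = j then u a else 1) i (\<sigma>!i)))"
    using assms(2) by (intro sum.cong) (auto simp: prod.delta)
  also have "\<dots> = (\<Prod>i<n. \<Sum>a\<in>UNIV. ps i a * (if i = j then u a else 1))" by (rule prodm_gen)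
  also have "\<dots> = (\<Prod>i<n. if i = j then (\<Sum>a\<in>UNIV. ps j a * u a) else 1)"
    using assms(1) by (intro prod.cong) auto
  also have "\<dots> = (\<Sum>a\<in>UNIV. ps j a * u a)" using assms(2) by (simp add: prod.delta)
  finally show ?thesis .
qed

lemma prodm_two:
  fixes ps :: "nat \<Rightarrow> 'a::finite \<Rightarrow> real"
  assumes "\<forall>j<n. (\<Sum>a\<in>UNIV. ps j a) = 1" and "j < n" "k < n" "j \<noteq> k"
  shows "(\<Sum>\<sigma>\<in>config n. prodm n ps \<sigma> * (u (\<sigma>!j) * v (\<sigma>!k))) = (\<Sum>a\<in>UNIV. ps j a * u a) * (\<Sum>a\<in>UNIV. ps k a * v a)"
proof -
  have "(\<Sum>\<sigma>\<in>config n. prodm n ps \<sigma> * (u (\<sigma>!j) * v (\<sigma>!k))) = (\<Sum>\<sigma>\<in>config n. prodm n ps \<sigma> * (\<Prod>i<n. (\<lambda>i a. (if i = j then u a else 1) * (if i = k then v a else 1)) i (\<sigma>!i)))"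
    using assms(2,3) by (intro sum.cong) (auto simp: prod.distrib prod.delta)
  also have "\<dots> = (\<Prod>i<n. \<Sum>a\<in>UNIV. ps i a * ((if i = j then u a else 1) * (if i = k then v a else 1)))" by (rule prodm_gen)
  also have "\<dots> = (\<Prod>i<n. (if i = j then (\<Sum>a\<in>UNIV. ps j a * u a) else 1) * (if i = k then (\<Sum>a\<in>UNIV. ps k a * v a) else 1))"
    using assms(1,4) by (intro prod.cong) auto
  also have "\<dots> = (\<Sum>a\<in>UNIV. ps j a * u a) * (\<Sum>a\<in>UNIV. ps k a * v a)" using assms(2,3) by (simp add: prod.distrib prod.delta)
  finally show ?thesis .
qed

lemma var_bound:
  fixes \<rho> :: "'a::finite list \<Rightarrow> real"
  assumes sum1: "(\<Sum>\<sigma>\<in>config n. \<rho> \<sigma>) = 1" and I: "I \<subseteq> {..<n}"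
  shows "(\<Sum>\<sigma>\<in>config n. \<rho> \<sigma> * (\<Sum>j\<in>I. (if \<sigma>!j = \<omega> then 1 else 0) - marg1 n \<rho> j \<omega>)\<^sup>2)
     \<le> real (card I) + (\<Sum>j\<in>I. \<Sum>k\<in>I-{j}. \<bar>marg2 n \<rho> j k (\<omega>,\<omega>) - marg1 n \<rho> j \<omega> * marg1 n \<rho> k \<omega>\<bar>)"
proof -
  define q where "q j = marg1 n \<rho> j \<omega>" for j
  define ind where "ind j \<sigma> = (if \<sigma>!j = \<omega> then 1 else (0::real))" for j and \<sigma> :: "'a list"
  define X where "X j \<sigma> = ind j \<sigma> - q j" for j \<sigma>
  have fin: "finite I" using I finite_subset by blast
  have E1: "(\<Sum>\<sigma>\<in>config n. \<rho> \<sigma> * ind j \<sigma>) = q j" for j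
    unfolding q_def marg1_def ind_def by (rule sum.cong) auto
  have E2: "(\<Sum>\<sigma>\<in>config n. \<rho> \<sigma> * (ind j \<sigma> * ind k \<sigma>)) = marg2 n \<rho> j k (\<omega>,\<omega>)" for j k
    unfolding marg2_def ind_def by (rule sum.cong) auto
  have cov: "(\<Sum>\<sigma>\<in>config n. \<rho> \<sigma> * (X j \<sigma> * X k \<sigma>)) = marg2 n \<rho> j k (\<omega>,\<omega>) - q j * q k" for j k
  proof -
    have "(\<Sum>\<sigma>\<in>config n. \<rho> \<sigma> * (X j \<sigma> * X k \<sigma>)) = (\<Sum>\<sigma>\<in>config n. \<rho> \<sigma> * (ind j \<sigma> * ind k \<sigma>) - q k * (\<rho> \<sigma> * ind j \<sigma>) - q j * (\<rho> \<sigma> * ind k \<sigma>) + q j * q k * \<rho> \<sigma>)"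
      unfolding X_def by (rule sum.cong) (auto simp: algebra_simps)
    also have "\<dots> = marg2 n \<rho> j k (\<omega>,\<omega>) - q k * q j - q j * q k + q j * q k"
      by (simp add: sum.distrib sum_subtractf sum_distrib_left[symmetric] E1 E2 sum1)
    finally show ?thesis by simp
  qed
  have m2: "marg2 n \<rho> j j (\<omega>,\<omega>) = q j" for j
    unfolding marg2_def q_def marg1_def by simp
  have diag: "(\<Sum>\<sigma>\<in>config n. \<rho> \<sigma> * (X j \<sigma> * X j \<sigma>)) \<le> 1" for j
  proof -
    have "q j - q j * q j \<le> 1" using zero_le_square[of "q j - 1/2"] by (simp add: algebra_simps)
    thus ?thesis using cov[of j j] m2[of j] by simp
  qed
  have "(\<Sum>\<sigma>\<in>config n. \<rho> \<sigma> * (\<Sum>j\<in>I. X j \<sigma>)\<^sup>2) = (\<Sum>\<sigma>\<in>config n. \<Sum>j\<in>I. \<Sum>k\<in>I. \<rho> \<sigma> * (X j \<sigma> * X k \<sigma>))"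
  proof (intro sum.cong refl)
    fix \<sigma> :: "'a list"
    have "(\<Sum>j\<in>I. X j \<sigma>)\<^sup>2 = (\<Sum>j\<in>I. \<Sum>k\<in>I. X j \<sigma> * X k \<sigma>)"
      unfolding power2_eq_square by (rule sum_product)
    thus "\<rho> \<sigma> * (\<Sum>j\<in>I. X j \<sigma>)\<^sup>2 = (\<Sum>j\<in>I. \<Sum>k\<in>I. \<rho> \<sigma> * (X j \<sigma> * X k \<sigma>))"
      by (simp add: sum_distrib_left)
  qed
  also have "\<dots> = (\<Sum>j\<in>I. \<Sum>k\<in>I. \<Sum>\<sigma>\<in>config n. \<rho> \<sigma> * (X j \<sigma> * X k \<sigma>))"
    by (subst sum.swap) (intro sum.cong refl, rule sum.swap)
  also have "\<dots> = (\<Sum>j\<in>I. (\<Sum>\<sigma>\<in>config n. \<rho> \<sigma> * (X j \<sigma> * X j \<sigma>)) + (\<Sum>k\<in>I-{j}. \<Sum>\<sigma>\<in>config n. \<rho> \<sigma> * (X j \<sigma> * X k \<sigma>)))"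
    using fin by (intro sum.cong refl) (simp add: sum.remove)
  also have "\<dots> \<le> (\<Sum>j\<in>I. 1 + (\<Sum>k\<in>I-{j}. \<bar>marg2 n \<rho> j k (\<omega>,\<omega>) - q j * q k\<bar>))"
    by (intro sum_mono add_mono diag) (simp add: cov)
  also have "\<dots> = real (card I) + (\<Sum>j\<in>I. \<Sum>k\<in>I-{j}. \<bar>marg2 n \<rho> j k (\<omega>,\<omega>) - q j * q k\<bar>)"
    by (simp add: sum.distrib)
  finally show ?thesis unfolding X_def ind_def q_def .
qed

lemma abs_le_sq: "c > 0 \<Longrightarrow> \<bar>a::real\<bar> \<le> a\<^sup>2 / (2*c) + c/2"
proof -
  assume c: "c > 0"
  have "0 \<le> (\<bar>a\<bar> - c)\<^sup>2" by simp
  hence "2*c*\<bar>a\<bar> \<le> a\<^sup>2 + c\<^sup>2" by (simp add: power2_eq_square algebra_simps)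
  hence "\<bar>a\<bar> \<le> (a\<^sup>2 + c\<^sup>2) / (2*c)" using c by (simp add: field_simps)
  thus ?thesis using c by (simp add: field_simps power2_eq_square)
qed

lemma E_abs_bound:
  fixes \<rho> :: "'a::finite list \<Rightarrow> real"
  assumes nn: "\<forall>\<sigma>. 0 \<le> \<rho> \<sigma>" and sum1: "(\<Sum>\<sigma>\<in>config n. \<rho> \<sigma>) = 1" and I: "I \<subseteq> {..<n}"
    and T: "(\<Sum>j\<in>{..<n}. \<Sum>k\<in>{..<n}-{j}. \<bar>marg2 n \<rho> j k (\<omega>,\<omega>) - marg1 n \<rho> j \<omega> * marg1 n \<rho> k \<omega>\<bar>) \<le> T"
    and c: "c > 0"
  shows "(\<Sum>\<sigma>\<in>config n. \<rho> \<sigma> * \<bar>\<Sum>j\<in>I. (if \<sigma>!j = \<omega> then 1 else 0) - marg1 n \<rho> j \<omega>\<bar>) \<le> (real n + T) / (2*c) + c/2"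
proof -
  define A where "A \<sigma> = (\<Sum>j\<in>I. (if \<sigma>!j = \<omega> then 1 else 0) - marg1 n \<rho> j \<omega>)" for \<sigma>
  define D where "D j k = \<bar>marg2 n \<rho> j k (\<omega>,\<omega>) - marg1 n \<rho> j \<omega> * marg1 n \<rho> k \<omega>\<bar>" for j k
  have "(\<Sum>\<sigma>\<in>config n. \<rho> \<sigma> * \<bar>A \<sigma>\<bar>) \<le> (\<Sum>\<sigma>\<in>config n. \<rho> \<sigma> * ((A \<sigma>)\<^sup>2 / (2*c) + c/2))"
    by (intro sum_mono mult_left_mono abs_le_sq c) (use nn in auto)
  also have "\<dots> = (\<Sum>\<sigma>\<in>config n. \<rho> \<sigma> * (A \<sigma>)\<^sup>2) / (2*c) + c/2"
    by (simp add: algebra_simps sum.distrib sum_divide_distrib[symmetric] sum_distrib_right[symmetric] sum_distrib_left[symmetric] sum1)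
  also have "\<dots> \<le> (real n + T) / (2*c) + c/2"
  proof -
    have fin: "finite I" using I finite_subset by blast
    have "card I \<le> card {..<n}" using I by (intro card_mono) auto
    hence cI: "real (card I) \<le> real n" by simp
    have "(\<Sum>j\<in>I. \<Sum>k\<in>I-{j}. D j k) \<le> (\<Sum>j\<in>I. \<Sum>k\<in>{..<n}-{j}. D j k)"
      using I by (intro sum_mono sum_mono2) (auto simp: D_def)
    also have "\<dots> \<le> (\<Sum>j\<in>{..<n}. \<Sum>k\<in>{..<n}-{j}. D j k)"
      using I by (intro sum_mono2) (auto simp: D_def intro: sum_nonneg)
    finally have "(\<Sum>j\<in>I. \<Sum>k\<in>I-{j}. D j k) \<le> T" using T unfolding D_def by linarith
    hence "(\<Sum>\<sigma>\<in>config n. \<rho> \<sigma> * (A \<sigma>)\<^sup>2) \<le> real n + T"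
      using var_bound[OF sum1 I, of \<omega>] cI unfolding A_def D_def by linarith
    thus ?thesis using c by (simp add: divide_right_mono)
  qed
  finally show ?thesis unfolding A_def .
qed

lemma cut_set_finite:
  "finite {(f I B \<omega>::real) | I B (\<omega>::'a::finite). I \<subseteq> {..<(n::nat)} \<and> B \<subseteq> (config n \<times> config n :: ('a list \<times> 'a list) set)}"
proof -
  have "{(f I B \<omega>::real) | I B (\<omega>::'a::finite). I \<subseteq> {..<(n::nat)} \<and> B \<subseteq> (config n \<times> config n :: ('a list \<times> 'a list) set)}
     \<subseteq> (\<lambda>(I,B,\<omega>). f I B \<omega>) ` (Pow {..<n} \<times> Pow (config n \<times> config n) \<times> UNIV)"
  proof clarify
    fix I B \<omega> assume "I \<subseteq> {..<n}" "B \<subseteq> (config n \<times> config n :: ('a list \<times> 'a list) set)"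
    thus "f I B \<omega> \<in> (\<lambda>(I,B,\<omega>). f I B \<omega>) ` (Pow {..<n} \<times> Pow (config n \<times> config n) \<times> UNIV)"
      by (intro image_eqI[where x="(I,B,\<omega>)"]) auto
  qed
  moreover have "finite (Pow {..<n} \<times> Pow (config n \<times> config n :: ('a list \<times> 'a list) set) \<times> (UNIV :: 'a set))"
    by (simp add: finite_config)
  ultimately show ?thesis using finite_subset by blast
qed

lemma cut_val_nonneg: "0 \<le> cut_val n (\<gamma> :: 'a::finite list \<times> 'a list \<Rightarrow> real)"
proof -
  obtain \<omega> :: 'a where True by blast
  have "0 \<in> {\<bar>\<Sum>i\<in>I. \<Sum>x\<in>B. \<gamma> x *
        ((if fst x ! i = \<omega> then 1 else 0) - (if snd x ! i = \<omega> then 1 else 0))\<bar> |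
      I B \<omega>. I \<subseteq> {..<n} \<and> B \<subseteq> config n \<times> config n}"
    by (rule CollectI, rule exI[of _ "{}"], rule exI[of _ "{}"], rule exI[of _ \<omega>]) simp
  thus ?thesis unfolding cut_val_def by (rule Max_ge[OF cut_set_finite])
qed

lemma cut_val_less:
  fixes \<gamma> :: "'a::finite list \<times> 'a list \<Rightarrow> real"
  assumes "\<And>I B \<omega>. I \<subseteq> {..<n} \<Longrightarrow> B \<subseteq> config n \<times> config n \<Longrightarrow>
     \<bar>\<Sum>i\<in>I. \<Sum>x\<in>B. \<gamma> x * ((if fst x ! i = \<omega> then 1 else 0) - (if snd x ! i = \<omega> then 1 else 0))\<bar> < t"
  shows "cut_val n \<gamma> < t"
proof -
  obtain \<omega> :: 'a where True by blast
  have ne: "{\<bar>\<Sum>i\<in>I. \<Sum>x\<in>B. \<gamma> x *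
        ((if fst x ! i = \<omega> then 1 else 0) - (if snd x ! i = \<omega> then 1 else 0))\<bar> |
      I B \<omega>. I \<subseteq> {..<n} \<and> B \<subseteq> config n \<times> config n} \<noteq> {}"
    by blast
  show ?thesis unfolding cut_val_def using assms
    by (subst Max_less_iff[OF cut_set_finite ne]) blast
qed

lemma sum_if_subset:
  assumes "finite C" "A \<subseteq> C"
  shows "(\<Sum>x\<in>C. if x \<in> A then f x else (0::real)) = (\<Sum>x\<in>A. f x)"
proof -
  have "(\<Sum>x\<in>C. if x \<in> A then f x else (0::real)) = (\<Sum>x\<in>C \<inter> A. f x)"
    using assms(1) by (simp add: sum.inter_restrict)
  also have "C \<inter> A = A" using assms(2) by blast
  finally show ?thesis .
qed

lemma entry_le_tv: "\<bar>p x - r x\<bar> \<le> 2 * tv p (r :: 'b::finite \<Rightarrow> real)"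
  unfolding tv_def by (simp add: member_le_sum[where f="\<lambda>x. \<bar>p x - r x\<bar>"])

lemma marg1_sum1:
  fixes \<rho> :: "'a::finite list \<Rightarrow> real"
  assumes "(\<Sum>\<sigma>\<in>config n. \<rho> \<sigma>) = 1"
  shows "(\<Sum>a\<in>UNIV. marg1 n \<rho> j a) = 1"
proof -
  have "(\<Sum>a\<in>UNIV. marg1 n \<rho> j a) = (\<Sum>\<sigma>\<in>config n. \<Sum>a\<in>UNIV. if \<sigma> ! j = a then \<rho> \<sigma> else 0)"
    unfolding marg1_def by (rule sum.swap)
  also have "\<dots> = (\<Sum>\<sigma>\<in>config n. \<rho> \<sigma>)" by simp
  finally show ?thesis using assms by simp
qed

lemma marg1_nonneg: "\<forall>\<sigma>. 0 \<le> \<rho> \<sigma> \<Longrightarrow> 0 \<le> marg1 n \<rho> j a"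
  unfolding marg1_def by (intro sum_nonneg) auto

lemma prodm_facts:
  fixes ps :: "nat \<Rightarrow> 'a::finite \<Rightarrow> real"
  assumes s1: "\<forall>j<n. (\<Sum>a\<in>UNIV. ps j a) = 1" and nn: "\<forall>j a. 0 \<le> ps j a" and n: "n > 0"
  shows "\<forall>\<sigma>. 0 \<le> prodm n ps \<sigma>" "(\<Sum>\<sigma>\<in>config n. prodm n ps \<sigma>) = 1"
    "\<And>j \<omega>. j < n \<Longrightarrow> marg1 n (prodm n ps) j \<omega> = ps j \<omega>"
    "\<And>j k \<omega>. j < n \<Longrightarrow> k < n \<Longrightarrow> j \<noteq> k \<Longrightarrow> marg2 n (prodm n ps) j k (\<omega>,\<omega>) = ps j \<omega> * ps k \<omega>"
proof -
  show "\<forall>\<sigma>. 0 \<le> prodm n ps \<sigma>" using nn by (auto simp: prodm_def intro: prod_nonneg)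
  show "(\<Sum>\<sigma>\<in>config n. prodm n ps \<sigma>) = 1"
    using prodm_one[OF s1 n, of "\<lambda>_. 1"] s1 n by simp
  fix j \<omega> assume j: "j < n"
  have "marg1 n (prodm n ps) j \<omega> = (\<Sum>\<sigma>\<in>config n. prodm n ps \<sigma> * (\<lambda>a. if a = \<omega> then 1 else 0) (\<sigma>!j))"
    unfolding marg1_def by (rule sum.cong) auto
  also have "\<dots> = (\<Sum>a\<in>UNIV. ps j a * (\<lambda>a. if a = \<omega> then 1 else 0) a)" by (rule prodm_one[OF s1 j])
  also have "\<dots> = ps j \<omega>" by (simp add: if_distrib cong: if_cong)
  finally show "marg1 n (prodm n ps) j \<omega> = ps j \<omega>" .
next
  fix j k \<omega> assume j: "j < n" and k: "k < n" and jk: "j \<noteq> k"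
  have "marg2 n (prodm n ps) j k (\<omega>,\<omega>) = (\<Sum>\<sigma>\<in>config n. prodm n ps \<sigma> * ((\<lambda>a. if a = \<omega> then 1 else 0) (\<sigma>!j) * (\<lambda>a. if a = \<omega> then 1 else 0) (\<sigma>!k)))"
    unfolding marg2_def by (rule sum.cong) auto
  also have "\<dots> = (\<Sum>a\<in>UNIV. ps j a * (\<lambda>a. if a = \<omega> then 1 else 0) a) * (\<Sum>a\<in>UNIV. ps k a * (\<lambda>a. if a = \<omega> then 1 else 0) a)" by (rule prodm_two[OF s1 j k jk])
  also have "\<dots> = ps j \<omega> * ps k \<omega>" by (simp add: if_distrib cong: if_cong)
  finally show "marg2 n (prodm n ps) j k (\<omega>,\<omega>) = ps j \<omega> * ps k \<omega>" .
qed

lemma final_arith: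
  fixes e N :: real
  assumes e: "0 < e" "e < 1/2" and N: "N * e\<^sup>2 > 8"
  shows "((N + 2*N\<^sup>2*(e/9)^3)/(2*(e*N/2)) + (e*N/2)/2) + ((N + 0)/(2*(e*N/2)) + (e*N/2)/2) \<le> e * N"
proof -
  have Np: "N > 0" using N e by (metis mult_pos_pos zero_less_power not_less order.strict_trans mult_nonpos_nonneg zero_le_power2 zero_less_numeral less_le_not_le)
  have lhs: "((N + 2*N\<^sup>2*(e/9)^3)/(2*(e*N/2)) + (e*N/2)/2) + ((N + 0)/(2*(e*N/2)) + (e*N/2)/2)
      = 2/e + 2*N*e\<^sup>2/729 + e*N/2"
    using Np e by (simp add: field_simps power2_eq_square power3_eq_cube)
  have a: "2/e < e*N/4" using N e by (simp add: field_simps power2_eq_square)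
  have "2*N*e\<^sup>2/729 \<le> e*N/4"
  proof -
    have "2*e \<le> 729/4" using e by simp
    hence "(2*e) * (N*e) \<le> (729/4) * (N*e)" using Np e by (intro mult_right_mono) auto
    thus ?thesis by (simp add: power2_eq_square algebra_simps)
  qed
  thus ?thesis using lhs a by linarith
qed

lemma double_sum_helper:
  fixes X P Aa Y :: "nat \<Rightarrow> 'b \<Rightarrow> real" and Z N :: "'b \<Rightarrow> real"
  shows "(\<Sum>\<sigma>\<in>C. \<Sum>\<tau>\<in>C. (\<Sum>i\<in>K. X i \<sigma> * P i \<tau> + Aa i \<sigma> * Y i \<tau>) + Z \<sigma> * N \<tau>)
    = (\<Sum>i\<in>K. (\<Sum>\<sigma>\<in>C. X i \<sigma>) * (\<Sum>\<tau>\<in>C. P i \<tau>) + (\<Sum>\<sigma>\<in>C. Aa i \<sigma>) * (\<Sum>\<tau>\<in>C. Y i \<tau>)) + (\<Sum>\<sigma>\<in>C. Z \<sigma>) * (\<Sum>\<tau>\<in>C. N \<tau>)"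
proof -
  have "(\<Sum>\<sigma>\<in>C. \<Sum>\<tau>\<in>C. (\<Sum>i\<in>K. X i \<sigma> * P i \<tau> + Aa i \<sigma> * Y i \<tau>) + Z \<sigma> * N \<tau>)
     = (\<Sum>\<sigma>\<in>C. \<Sum>\<tau>\<in>C. \<Sum>i\<in>K. X i \<sigma> * P i \<tau> + Aa i \<sigma> * Y i \<tau>) + (\<Sum>\<sigma>\<in>C. \<Sum>\<tau>\<in>C. Z \<sigma> * N \<tau>)"
    by (simp add: sum.distrib)
  also have "(\<Sum>\<sigma>\<in>C. \<Sum>\<tau>\<in>C. \<Sum>i\<in>K. X i \<sigma> * P i \<tau> + Aa i \<sigma> * Y i \<tau>) = (\<Sum>\<sigma>\<in>C. \<Sum>i\<in>K. \<Sum>\<tau>\<in>C. X i \<sigma> * P i \<tau> + Aa i \<sigma> * Y i \<tau>)"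
    by (intro sum.cong refl) (rule sum.swap)
  also have "\<dots> = (\<Sum>i\<in>K. \<Sum>\<sigma>\<in>C. \<Sum>\<tau>\<in>C. X i \<sigma> * P i \<tau> + Aa i \<sigma> * Y i \<tau>)"
    by (rule sum.swap)
  also have "\<dots> = (\<Sum>i\<in>K. (\<Sum>\<sigma>\<in>C. X i \<sigma>) * (\<Sum>\<tau>\<in>C. P i \<tau>) + (\<Sum>\<sigma>\<in>C. Aa i \<sigma>) * (\<Sum>\<tau>\<in>C. Y i \<tau>))"
    by (simp add: sum.distrib sum_product)
  also have "(\<Sum>\<sigma>\<in>C. \<Sum>\<tau>\<in>C. Z \<sigma> * N \<tau>) = (\<Sum>\<sigma>\<in>C. Z \<sigma>) * (\<Sum>\<tau>\<in>C. N \<tau>)"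
    by (simp add: sum_product)
  finally show ?thesis .
qed

theorem proposition2p6:
  assumes "CARD('a::finite) \<ge> 2"
  shows "\<forall>\<epsilon>::real. 0 < \<epsilon> \<and> \<epsilon> < 1/2 \<longrightarrow>
    (\<exists>n0::nat. \<forall>n > n0. \<forall>(\<mu> :: 'a list \<Rightarrow> real) (l::nat) (S :: nat \<Rightarrow> 'a list set).
       is_prob n \<mu>
       \<and> (\<forall>i\<in>{1..l}. S i \<subseteq> config n)
       \<and> (\<forall>i\<in>{1..l}. \<forall>h\<in>{1..l}. i \<noteq> h \<longrightarrow> S i \<inter> S h = {})
       \<and> (\<Sum>i=1..l. msr n \<mu> (S i)) > 1 - \<epsilon>
       \<and> (\<forall>i\<in>{1..l}. msr n \<mu> (S i) > 0 \<and> eps_symmetric n (cond n \<mu> (S i)) ((\<epsilon>/9)^3))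
       \<longrightarrow> (let z = (\<Sum>h=1..l. msr n \<mu> (S h)) in
            cut_dist n \<mu> (\<lambda>\<sigma>. (1/z) * (\<Sum>i=1..l. msr n \<mu> (S i) *
               prodm n (\<lambda>j. marg1 n (cond n \<mu> (S i)) j) \<sigma>)) < 2 * \<epsilon>))"
proof (intro allI impI)
  fix \<epsilon> :: real assume "0 < \<epsilon> \<and> \<epsilon> < 1/2"
  hence e0: "0 < \<epsilon>" and e1: "\<epsilon> < 1/2" by auto
  define n0 :: nat where "n0 = nat \<lceil>8/\<epsilon>\<^sup>2\<rceil>"
  show "\<exists>n0::nat. \<forall>n > n0. \<forall>(\<mu> :: 'a list \<Rightarrow> real) (l::nat) (S :: nat \<Rightarrow> 'a list set).
       is_prob n \<mu>
       \<and> (\<forall>i\<in>{1..l}. S i \<subseteq> config n)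
       \<and> (\<forall>i\<in>{1..l}. \<forall>h\<in>{1..l}. i \<noteq> h \<longrightarrow> S i \<inter> S h = {})
       \<and> (\<Sum>i=1..l. msr n \<mu> (S i)) > 1 - \<epsilon>
       \<and> (\<forall>i\<in>{1..l}. msr n \<mu> (S i) > 0 \<and> eps_symmetric n (cond n \<mu> (S i)) ((\<epsilon>/9)^3))
       \<longrightarrow> (let z = (\<Sum>h=1..l. msr n \<mu> (S h)) in
            cut_dist n \<mu> (\<lambda>\<sigma>. (1/z) * (\<Sum>i=1..l. msr n \<mu> (S i) *
               prodm n (\<lambda>j. marg1 n (cond n \<mu> (S i)) j) \<sigma>)) < 2 * \<epsilon>)"
  proof (rule exI[of _ n0], intro allI impI)
    fix n :: nat and \<mu> :: "'a list \<Rightarrow> real" and l :: nat and S :: "nat \<Rightarrow> 'a list set"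
    assume nn0: "n > n0"
    assume H: "is_prob n \<mu>
       \<and> (\<forall>i\<in>{1..l}. S i \<subseteq> config n)
       \<and> (\<forall>i\<in>{1..l}. \<forall>h\<in>{1..l}. i \<noteq> h \<longrightarrow> S i \<inter> S h = {})
       \<and> (\<Sum>i=1..l. msr n \<mu> (S i)) > 1 - \<epsilon>
       \<and> (\<forall>i\<in>{1..l}. msr n \<mu> (S i) > 0 \<and> eps_symmetric n (cond n \<mu> (S i)) ((\<epsilon>/9)^3))"
    have prob: "is_prob n \<mu>" using H by blast
    have Ssub: "\<And>i. i \<in> {1..l} \<Longrightarrow> S i \<subseteq> config n" using H by blast
    have disj: "\<And>i h. i \<in> {1..l} \<Longrightarrow> h \<in> {1..l} \<Longrightarrow> i \<noteq> h \<Longrightarrow> S i \<inter> S h = {}" using H by blast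
    have zbig: "(\<Sum>i=1..l. msr n \<mu> (S i)) > 1 - \<epsilon>" using H by blast
    have mpos: "\<And>i. i \<in> {1..l} \<Longrightarrow> msr n \<mu> (S i) > 0" using H by blast
    have symm: "\<And>i. i \<in> {1..l} \<Longrightarrow> eps_symmetric n (cond n \<mu> (S i)) ((\<epsilon>/9)^3)" using H by blast
    have "real n0 \<ge> 8/\<epsilon>\<^sup>2" unfolding n0_def by linarith
    hence nbig: "real n > 8/\<epsilon>\<^sup>2" using nn0 by linarith
    hence nbig2: "real n * \<epsilon>\<^sup>2 > 8" using e0 by (simp add: field_simps)
    have npos: "n > 0" using nn0 by simp
    have \<mu>nn: "\<forall>\<sigma>. 0 \<le> \<mu> \<sigma>" and \<mu>1: "(\<Sum>\<sigma>\<in>config n. \<mu> \<sigma>) = 1" using prob by (auto simp: is_prob_def)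
    define C where "C = (config n :: 'a list set)"
    have fC: "finite C" unfolding C_def by (rule finite_config)
    define m where "m i = msr n \<mu> (S i)" for i
    define \<mu>c where "\<mu>c i = cond n \<mu> (S i)" for i
    define ps where "ps i = (\<lambda>j. marg1 n (\<mu>c i) j)" for i
    define \<pi> where "\<pi> i = prodm n (ps i)" for i
    define z where "z = (\<Sum>h=1..l. m h)"
    define \<nu> where "\<nu> \<sigma> = (1/z) * (\<Sum>i=1..l. m i * \<pi> i \<sigma>)" for \<sigma>
    define a where "a i \<sigma> = (if \<sigma> \<in> S i then \<mu> \<sigma> else 0)" for i \<sigma>
    define \<mu>R where "\<mu>R \<sigma> = \<mu> \<sigma> - (\<Sum>i=1..l. a i \<sigma>)" for \<sigma>
    define \<gamma> where "\<gamma> x = (if x \<in> C \<times> C then (\<Sum>i=1..l. a i (fst x) * \<pi> i (snd x)) + \<mu>R (fst x) * \<nu> (snd x) else 0)" for x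
    have sum_a: "(\<Sum>\<sigma>\<in>C. a i \<sigma>) = m i" if "i \<in> {1..l}" for i
    proof -
      have "(\<Sum>\<sigma>\<in>C. a i \<sigma>) = (\<Sum>\<sigma>\<in>S i. \<mu> \<sigma>)"
        unfolding a_def by (rule sum_if_subset[OF fC]) (use Ssub[OF that] C_def in auto)
      also have "\<dots> = m i" unfolding m_def msr_def using Ssub[OF that] by (simp add: Int_absorb2)
      finally show ?thesis .
    qed
    have a_eq: "a i \<sigma> = m i * \<mu>c i \<sigma>" if "i \<in> {1..l}" "\<sigma> \<in> C" for i \<sigma>
      using that mpos[OF that(1)] unfolding a_def m_def \<mu>c_def cond_def C_def by auto
    have \<mu>c_nn: "\<forall>\<sigma>. 0 \<le> \<mu>c i \<sigma>" if "i \<in> {1..l}" for i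
      using \<mu>nn mpos[OF that] unfolding \<mu>c_def cond_def by auto
    have \<mu>c_1: "(\<Sum>\<sigma>\<in>C. \<mu>c i \<sigma>) = 1" if "i \<in> {1..l}" for i
    proof -
      have "m i = (\<Sum>\<sigma>\<in>C. m i * \<mu>c i \<sigma>)" using sum_a[OF that] a_eq[OF that] by simp
      also have "\<dots> = m i * (\<Sum>\<sigma>\<in>C. \<mu>c i \<sigma>)" by (simp add: sum_distrib_left)
      finally show ?thesis using mpos[OF that] unfolding m_def by simp
    qed
    have ps_1: "\<forall>j<n. (\<Sum>a\<in>UNIV. ps i j a) = 1" if "i \<in> {1..l}" for i
      unfolding ps_def using marg1_sum1 \<mu>c_1[OF that] C_def by blast
    have ps_nn: "\<forall>j a. 0 \<le> ps i j a" if "i \<in> {1..l}" for i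
      unfolding ps_def using marg1_nonneg[OF \<mu>c_nn[OF that]] by blast
    note \<pi>f = prodm_facts[OF ps_1 ps_nn npos, folded \<pi>_def]
    have \<pi>_nn: "\<forall>\<sigma>. 0 \<le> \<pi> i \<sigma>" if "i \<in> {1..l}" for i
      using \<pi>f(1) that by auto
    have \<pi>_1: "(\<Sum>\<sigma>\<in>C. \<pi> i \<sigma>) = 1" if "i \<in> {1..l}" for i
      using \<pi>f(2) that C_def by auto
    have zgt: "z > 1 - \<epsilon>" using zbig unfolding z_def m_def .
    hence zpos: "z > 0" using e1 by linarith
    have m_nn: "m i \<ge> 0" if "i \<in> {1..l}" for i using mpos[OF that] m_def by fastforce
    have sumA: "(\<Sum>i=1..l. a i \<sigma>) = (if \<exists>i\<in>{1..l}. \<sigma> \<in> S i then \<mu> \<sigma> else 0)" for \<sigma>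
    proof (cases "\<exists>i\<in>{1..l}. \<sigma> \<in> S i")
      case True
      then obtain i0 where i0: "i0 \<in> {1..l}" "\<sigma> \<in> S i0" by blast
      have "(\<Sum>i=1..l. a i \<sigma>) = a i0 \<sigma> + (\<Sum>i\<in>{1..l}-{i0}. a i \<sigma>)"
        using i0(1) by (simp add: sum.remove)
      also have "(\<Sum>i\<in>{1..l}-{i0}. a i \<sigma>) = 0"
      proof (rule sum.neutral, rule ballI)
        fix i assume "i \<in> {1..l}-{i0}"
        hence "\<sigma> \<notin> S i" using disj[of i i0] i0 by blast
        thus "a i \<sigma> = 0" unfolding a_def by simp
      qed
      finally show ?thesis using True i0 unfolding a_def by simp
    next
      case False
      thus ?thesis unfolding a_def by (intro trans[OF sum.neutral]) auto
    qed
    have \<mu>R_nn: "0 \<le> \<mu>R \<sigma>" for \<sigma> unfolding \<mu>R_def sumA using \<mu>nn by auto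
    have \<mu>R_sum: "(\<Sum>\<sigma>\<in>C. \<mu>R \<sigma>) = 1 - z"
    proof -
      have "(\<Sum>\<sigma>\<in>C. \<mu>R \<sigma>) = (\<Sum>\<sigma>\<in>C. \<mu> \<sigma>) - (\<Sum>\<sigma>\<in>C. \<Sum>i=1..l. a i \<sigma>)"
        unfolding \<mu>R_def by (simp add: sum_subtractf)
      also have "(\<Sum>\<sigma>\<in>C. \<Sum>i=1..l. a i \<sigma>) = (\<Sum>i=1..l. \<Sum>\<sigma>\<in>C. a i \<sigma>)" by (rule sum.swap)
      also have "\<dots> = z" unfolding z_def by (rule sum.cong) (auto simp: sum_a)
      finally show ?thesis using \<mu>1 C_def by simp
    qed
    have "0 \<le> (\<Sum>\<sigma>\<in>C. \<mu>R \<sigma>)" using \<mu>R_nn by (simp add: sum_nonneg)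
    hence zle: "z \<le> 1" using \<mu>R_sum by linarith
    have zn: "(\<Sum>i=1..l. m i * \<pi> i \<tau>) = z * \<nu> \<tau>" for \<tau>
      unfolding \<nu>_def using zpos by simp
    have \<nu>_nn: "0 \<le> \<nu> \<tau>" for \<tau>
    proof -
      have "0 \<le> (\<Sum>i=1..l. m i * \<pi> i \<tau>)" using m_nn \<pi>_nn by (intro sum_nonneg mult_nonneg_nonneg) auto
      thus ?thesis unfolding \<nu>_def using zpos by simp
    qed
    have \<nu>_1: "(\<Sum>\<tau>\<in>C. \<nu> \<tau>) = 1"
    proof -
      have "(\<Sum>\<tau>\<in>C. \<nu> \<tau>) = (1/z) * (\<Sum>\<tau>\<in>C. \<Sum>i=1..l. m i * \<pi> i \<tau>)"
        unfolding \<nu>_def by (rule sum_distrib_left[symmetric])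
      also have "(\<Sum>\<tau>\<in>C. \<Sum>i=1..l. m i * \<pi> i \<tau>) = (\<Sum>i=1..l. \<Sum>\<tau>\<in>C. m i * \<pi> i \<tau>)"
        by (rule sum.swap)
      also have "\<dots> = (\<Sum>i=1..l. m i * (\<Sum>\<tau>\<in>C. \<pi> i \<tau>))"
        by (simp add: sum_distrib_left)
      also have "\<dots> = z" unfolding z_def by (intro sum.cong) (auto simp: \<pi>_1)
      finally show ?thesis using zpos by simp
    qed

    have a_nn: "0 \<le> a i \<sigma>" for i \<sigma> unfolding a_def using \<mu>nn by auto
    have \<gamma>_nn: "0 \<le> \<gamma> x" for x
      unfolding \<gamma>_def using a_nn \<pi>_nn \<mu>R_nn \<nu>_nn
      by (auto intro!: add_nonneg_nonneg sum_nonneg mult_nonneg_nonneg)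
    have coup: "\<gamma> \<in> couplings n \<mu> \<nu>"
      unfolding couplings_def
    proof (intro CollectI conjI allI ballI impI)
      fix x show "0 \<le> \<gamma> x" by (rule \<gamma>_nn)
    next
      fix x :: "'a list \<times> 'a list" assume "x \<notin> config n \<times> config n" thus "\<gamma> x = 0" unfolding \<gamma>_def C_def by simp
    next
      fix \<sigma> :: "'a list" assume \<sigma>: "\<sigma> \<in> config n"
      have "(\<Sum>\<tau>\<in>config n. \<gamma> (\<sigma>, \<tau>)) = (\<Sum>\<tau>\<in>C. (\<Sum>i=1..l. a i \<sigma> * \<pi> i \<tau>) + \<mu>R \<sigma> * \<nu> \<tau>)"
        unfolding C_def using \<sigma> by (intro sum.cong) (auto simp: \<gamma>_def C_def)
      also have "\<dots> = (\<Sum>\<tau>\<in>C. \<Sum>i=1..l. a i \<sigma> * \<pi> i \<tau>) + \<mu>R \<sigma> * (\<Sum>\<tau>\<in>C. \<nu> \<tau>)"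
        by (simp add: sum.distrib sum_distrib_left)
      also have "(\<Sum>\<tau>\<in>C. \<Sum>i=1..l. a i \<sigma> * \<pi> i \<tau>) = (\<Sum>i=1..l. \<Sum>\<tau>\<in>C. a i \<sigma> * \<pi> i \<tau>)"
        by (rule sum.swap)
      also have "\<dots> = (\<Sum>i=1..l. a i \<sigma>)"
        by (intro sum.cong refl) (simp add: sum_distrib_left[symmetric] \<pi>_1)
      finally show "(\<Sum>\<tau>\<in>config n. \<gamma> (\<sigma>, \<tau>)) = \<mu> \<sigma>" using \<nu>_1 unfolding \<mu>R_def by simp
    next
      fix \<tau> :: "'a list" assume \<tau>: "\<tau> \<in> config n"
      have "(\<Sum>\<sigma>\<in>config n. \<gamma> (\<sigma>, \<tau>)) = (\<Sum>\<sigma>\<in>C. (\<Sum>i=1..l. a i \<sigma> * \<pi> i \<tau>) + \<mu>R \<sigma> * \<nu> \<tau>)"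
        unfolding C_def using \<tau> by (intro sum.cong) (auto simp: \<gamma>_def C_def)
      also have "\<dots> = (\<Sum>\<sigma>\<in>C. \<Sum>i=1..l. a i \<sigma> * \<pi> i \<tau>) + (\<Sum>\<sigma>\<in>C. \<mu>R \<sigma>) * \<nu> \<tau>"
        by (simp add: sum.distrib sum_distrib_right)
      also have "(\<Sum>\<sigma>\<in>C. \<Sum>i=1..l. a i \<sigma> * \<pi> i \<tau>) = (\<Sum>i=1..l. \<Sum>\<sigma>\<in>C. a i \<sigma> * \<pi> i \<tau>)"
        by (rule sum.swap)
      also have "\<dots> = (\<Sum>i=1..l. m i * \<pi> i \<tau>)"
        by (intro sum.cong refl) (simp add: sum_distrib_right[symmetric] sum_a)
      finally show "(\<Sum>\<sigma>\<in>config n. \<gamma> (\<sigma>, \<tau>)) = \<nu> \<tau>" using zn \<mu>R_sum by (simp add: algebra_simps)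
    qed
    define \<delta> :: real where "\<delta> = (\<epsilon>/9)^3"
    define c where "c = \<epsilon> * real n / 2"
    have cpos: "c > 0" unfolding c_def using e0 npos by simp
    have cutlt: "cut_val n \<gamma> < 2 * \<epsilon> * real n"
    proof (rule cut_val_less)
      fix I :: "nat set" and B :: "('a list \<times> 'a list) set" and \<omega> :: 'a
      assume I: "I \<subseteq> {..<n}" and B: "B \<subseteq> config n \<times> config n"
      define ind where "ind \<sigma> j = (if \<sigma>!j = \<omega> then 1 else (0::real))" for \<sigma> :: "'a list" and j
      define F where "F x = (\<Sum>j\<in>I. ind (fst x) j - ind (snd x) j)" for x
      define q where "q i j = marg1 n (\<mu>c i) j \<omega>" for i j
      define A where "A i \<sigma> = (\<Sum>j\<in>I. ind \<sigma> j - q i j)" for i \<sigma>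
      define E1 where "E1 i = (\<Sum>\<sigma>\<in>C. \<mu>c i \<sigma> * \<bar>A i \<sigma>\<bar>)" for i
      define E2 where "E2 i = (\<Sum>\<sigma>\<in>C. \<pi> i \<sigma> * \<bar>A i \<sigma>\<bar>)" for i
      have finI: "finite I" using I finite_subset by blast
      have cardI: "real (card I) \<le> real n" using card_mono[OF _ I] by simp
      have fCC: "finite (C \<times> C)" using fC by simp
      have "\<bar>\<Sum>j\<in>I. \<Sum>x\<in>B. \<gamma> x * ((if fst x ! j = \<omega> then 1 else 0) - (if snd x ! j = \<omega> then 1 else 0))\<bar>
          = \<bar>\<Sum>x\<in>B. \<gamma> x * F x\<bar>"
        unfolding F_def ind_def by (subst sum.swap) (simp add: sum_distrib_left)
      also have "\<dots> \<le> (\<Sum>x\<in>B. \<gamma> x * \<bar>F x\<bar>)"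
        using sum_abs[of "\<lambda>x. \<gamma> x * F x" B] \<gamma>_nn by (simp add: abs_mult)
      also have "\<dots> \<le> (\<Sum>x\<in>C \<times> C. \<gamma> x * \<bar>F x\<bar>)"
        using B fCC \<gamma>_nn unfolding C_def by (intro sum_mono2) auto
      also have "\<dots> = (\<Sum>\<sigma>\<in>C. \<Sum>\<tau>\<in>C. \<gamma> (\<sigma>,\<tau>) * \<bar>F (\<sigma>,\<tau>)\<bar>)"
        by (simp add: sum.cartesian_product)
      also have "\<dots> \<le> (\<Sum>\<sigma>\<in>C. \<Sum>\<tau>\<in>C. (\<Sum>i=1..l. (a i \<sigma> * \<bar>A i \<sigma>\<bar>) * \<pi> i \<tau> + a i \<sigma> * (\<pi> i \<tau> * \<bar>A i \<tau>\<bar>)) + (\<mu>R \<sigma> * real n) * \<nu> \<tau>)"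
      proof (intro sum_mono)
        fix \<sigma> \<tau> assume \<sigma>: "\<sigma> \<in> C" and \<tau>: "\<tau> \<in> C"
        have FA: "\<bar>F (\<sigma>,\<tau>)\<bar> \<le> \<bar>A i \<sigma>\<bar> + \<bar>A i \<tau>\<bar>" for i
        proof -
          have "F (\<sigma>,\<tau>) = A i \<sigma> - A i \<tau>" unfolding F_def A_def by (simp add: sum_subtractf)
          thus ?thesis by linarith
        qed
        have Fn: "\<bar>F (\<sigma>,\<tau>)\<bar> \<le> real n"
        proof -
          have "\<bar>F (\<sigma>,\<tau>)\<bar> \<le> (\<Sum>j\<in>I. \<bar>ind \<sigma> j - ind \<tau> j\<bar>)" unfolding F_def by (simp add: sum_abs)
          also have "\<dots> \<le> (\<Sum>j\<in>I. 1)" by (intro sum_mono) (auto simp: ind_def)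
          finally show ?thesis using cardI by simp
        qed
        have "\<gamma> (\<sigma>,\<tau>) * \<bar>F (\<sigma>,\<tau>)\<bar> = (\<Sum>i=1..l. a i \<sigma> * \<pi> i \<tau> * \<bar>F (\<sigma>,\<tau>)\<bar>) + \<mu>R \<sigma> * \<nu> \<tau> * \<bar>F (\<sigma>,\<tau>)\<bar>"
          unfolding \<gamma>_def using \<sigma> \<tau> by (simp add: sum_distrib_right distrib_right)
        also have "\<dots> \<le> (\<Sum>i=1..l. (a i \<sigma> * \<bar>A i \<sigma>\<bar>) * \<pi> i \<tau> + a i \<sigma> * (\<pi> i \<tau> * \<bar>A i \<tau>\<bar>)) + (\<mu>R \<sigma> * real n) * \<nu> \<tau>"
        proof (intro add_mono sum_mono)
          fix i assume i: "i \<in> {1..l}"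
          have "0 \<le> a i \<sigma> * \<pi> i \<tau>" using a_nn \<pi>_nn[OF i] by simp
          hence "a i \<sigma> * \<pi> i \<tau> * \<bar>F (\<sigma>,\<tau>)\<bar> \<le> a i \<sigma> * \<pi> i \<tau> * (\<bar>A i \<sigma>\<bar> + \<bar>A i \<tau>\<bar>)"
            using FA by (intro mult_left_mono) auto
          thus "a i \<sigma> * \<pi> i \<tau> * \<bar>F (\<sigma>,\<tau>)\<bar> \<le> (a i \<sigma> * \<bar>A i \<sigma>\<bar>) * \<pi> i \<tau> + a i \<sigma> * (\<pi> i \<tau> * \<bar>A i \<tau>\<bar>)"
            by (simp add: algebra_simps)
        next
          have "0 \<le> \<mu>R \<sigma> * \<nu> \<tau>" using \<mu>R_nn \<nu>_nn by simp
          hence "\<mu>R \<sigma> * \<nu> \<tau> * \<bar>F (\<sigma>,\<tau>)\<bar> \<le> \<mu>R \<sigma> * \<nu> \<tau> * real n" using Fn by (intro mult_left_mono) auto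
          thus "\<mu>R \<sigma> * \<nu> \<tau> * \<bar>F (\<sigma>,\<tau>)\<bar> \<le> (\<mu>R \<sigma> * real n) * \<nu> \<tau>" by (simp add: algebra_simps)
        qed
        finally show "\<gamma> (\<sigma>,\<tau>) * \<bar>F (\<sigma>,\<tau>)\<bar> \<le> (\<Sum>i=1..l. (a i \<sigma> * \<bar>A i \<sigma>\<bar>) * \<pi> i \<tau> + a i \<sigma> * (\<pi> i \<tau> * \<bar>A i \<tau>\<bar>)) + (\<mu>R \<sigma> * real n) * \<nu> \<tau>" .
      qed
      also have "\<dots> = (\<Sum>i=1..l. (\<Sum>\<sigma>\<in>C. a i \<sigma> * \<bar>A i \<sigma>\<bar>) * (\<Sum>\<tau>\<in>C. \<pi> i \<tau>) + (\<Sum>\<sigma>\<in>C. a i \<sigma>) * (\<Sum>\<tau>\<in>C. \<pi> i \<tau> * \<bar>A i \<tau>\<bar>)) + (\<Sum>\<sigma>\<in>C. \<mu>R \<sigma> * real n) * (\<Sum>\<tau>\<in>C. \<nu> \<tau>)"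
        by (rule double_sum_helper)
      also have "\<dots> = (\<Sum>i=1..l. m i * (E1 i + E2 i)) + (1 - z) * real n"
      proof -
        have "(\<Sum>\<sigma>\<in>C. \<mu>R \<sigma> * real n) = (1 - z) * real n" using \<mu>R_sum by (simp add: sum_distrib_right[symmetric])
        moreover have "(\<Sum>\<sigma>\<in>C. a i \<sigma> * \<bar>A i \<sigma>\<bar>) * (\<Sum>\<tau>\<in>C. \<pi> i \<tau>) + (\<Sum>\<sigma>\<in>C. a i \<sigma>) * (\<Sum>\<tau>\<in>C. \<pi> i \<tau> * \<bar>A i \<tau>\<bar>)
             = m i * (E1 i + E2 i)" if i: "i \<in> {1..l}" for i
        proof -
          have "(\<Sum>\<sigma>\<in>C. a i \<sigma> * \<bar>A i \<sigma>\<bar>) = (\<Sum>\<sigma>\<in>C. m i * (\<mu>c i \<sigma> * \<bar>A i \<sigma>\<bar>))"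
            using a_eq[OF i] by (intro sum.cong) auto
          also have "\<dots> = m i * E1 i" unfolding E1_def by (simp add: sum_distrib_left)
          finally show ?thesis using \<pi>_1[OF i] sum_a[OF i] unfolding E2_def by (simp add: algebra_simps)
        qed
        ultimately show ?thesis using \<nu>_1 by simp
      qed
      also have "\<dots> \<le> (\<Sum>i=1..l. m i * (\<epsilon> * real n)) + (1 - z) * real n"
      proof (intro add_mono sum_mono mult_left_mono order_refl)
        fix i assume i: "i \<in> {1..l}"
        show "0 \<le> m i" using m_nn[OF i] .
        have T1: "(\<Sum>j\<in>{..<n}. \<Sum>k\<in>{..<n}-{j}. \<bar>marg2 n (\<mu>c i) j k (\<omega>,\<omega>) - marg1 n (\<mu>c i) j \<omega> * marg1 n (\<mu>c i) k \<omega>\<bar>) \<le> 2 * real n ^ 2 * \<delta>"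
        proof -
          have "(\<Sum>j\<in>{..<n}. \<Sum>k\<in>{..<n}-{j}. \<bar>marg2 n (\<mu>c i) j k (\<omega>,\<omega>) - marg1 n (\<mu>c i) j \<omega> * marg1 n (\<mu>c i) k \<omega>\<bar>)
              \<le> (\<Sum>j\<in>{..<n}. \<Sum>k\<in>{..<n}-{j}. 2 * tv (marg2 n (\<mu>c i) j k) (\<lambda>p. marg1 n (\<mu>c i) j (fst p) * marg1 n (\<mu>c i) k (snd p)))"
            by (intro sum_mono, rule order_trans[OF _ entry_le_tv[where x="(\<omega>,\<omega>)"]]) simp
          also have "\<dots> = 2 * (\<Sum>j\<in>{..<n}. \<Sum>k\<in>{..<n}-{j}. tv (marg2 n (\<mu>c i) j k) (\<lambda>p. marg1 n (\<mu>c i) j (fst p) * marg1 n (\<mu>c i) k (snd p)))"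
            by (simp add: sum_distrib_left)
          also have "\<dots> \<le> 2 * (real n ^ 2 * \<delta>)"
          proof -
            have "(1 / (real n)^2) * (\<Sum>j\<in>{..<n}. \<Sum>k\<in>{..<n}-{j}. tv (marg2 n (\<mu>c i) j k) (\<lambda>p. marg1 n (\<mu>c i) j (fst p) * marg1 n (\<mu>c i) k (snd p))) < \<delta>"
              using symm[OF i] unfolding eps_symmetric_def \<mu>c_def \<delta>_def .
            hence "(\<Sum>j\<in>{..<n}. \<Sum>k\<in>{..<n}-{j}. tv (marg2 n (\<mu>c i) j k) (\<lambda>p. marg1 n (\<mu>c i) j (fst p) * marg1 n (\<mu>c i) k (snd p))) < real n ^ 2 * \<delta>"
              using npos by (simp add: field_simps)
            thus ?thesis by simp
          qed
          finally show ?thesis by simp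
        qed
        have B1: "E1 i \<le> (real n + 2 * real n ^ 2 * \<delta>) / (2*c) + c/2"
          using E_abs_bound[OF \<mu>c_nn[OF i] \<mu>c_1[OF i, unfolded C_def] I T1 cpos]
          unfolding E1_def A_def ind_def q_def C_def .
        have m1: "marg1 n (\<pi> i) j \<omega> = q i j" if "j < n" for j
          using \<pi>f(3)[OF i i that] unfolding q_def ps_def by simp
        have T2: "(\<Sum>j\<in>{..<n}. \<Sum>k\<in>{..<n}-{j}. \<bar>marg2 n (\<pi> i) j k (\<omega>,\<omega>) - marg1 n (\<pi> i) j \<omega> * marg1 n (\<pi> i) k \<omega>\<bar>) \<le> 0"
        proof -
          have "(\<Sum>j\<in>{..<n}. \<Sum>k\<in>{..<n}-{j}. \<bar>marg2 n (\<pi> i) j k (\<omega>,\<omega>) - marg1 n (\<pi> i) j \<omega> * marg1 n (\<pi> i) k \<omega>\<bar>) = 0"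
            using \<pi>f(3)[OF i i] \<pi>f(4)[OF i i] by (intro sum.neutral ballI) auto
          thus ?thesis by simp
        qed
        have B2': "(\<Sum>\<sigma>\<in>config n. \<pi> i \<sigma> * \<bar>\<Sum>j\<in>I. (if \<sigma>!j = \<omega> then 1 else 0) - marg1 n (\<pi> i) j \<omega>\<bar>) \<le> (real n + 0) / (2*c) + c/2"
          using E_abs_bound[OF \<pi>_nn[OF i] \<pi>_1[OF i, unfolded C_def] I T2 cpos] .
        have "E2 i = (\<Sum>\<sigma>\<in>config n. \<pi> i \<sigma> * \<bar>\<Sum>j\<in>I. (if \<sigma>!j = \<omega> then 1 else 0) - marg1 n (\<pi> i) j \<omega>\<bar>)"
          unfolding E2_def A_def ind_def C_def
          using I m1 by (intro sum.cong refl arg_cong2[where f="(*)"] arg_cong[where f=abs]) auto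
        hence B2: "E2 i \<le> (real n + 0) / (2*c) + c/2" using B2' by simp
        have "E1 i + E2 i \<le> ((real n + 2 * real n ^ 2 * \<delta>) / (2*c) + c/2) + ((real n + 0) / (2*c) + c/2)"
          using B1 B2 by linarith
        also have "\<dots> \<le> \<epsilon> * real n"
          unfolding c_def \<delta>_def using final_arith[OF e0 e1 nbig2] by simp
        finally show "E1 i + E2 i \<le> \<epsilon> * real n" .
      qed (use zle in simp)
      also have "\<dots> = z * (\<epsilon> * real n) + (1 - z) * real n"
        unfolding z_def by (simp add: sum_distrib_right)
      also have "\<dots> < 2 * \<epsilon> * real n"
      proof -
        have "z * (\<epsilon> * real n) \<le> 1 * (\<epsilon> * real n)" using zle e0 by (intro mult_right_mono) auto
        moreover have "(1 - z) * real n < \<epsilon> * real n" using zgt npos by (intro mult_strict_right_mono) auto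
        ultimately show ?thesis by linarith
      qed
      finally show "\<bar>\<Sum>j\<in>I. \<Sum>x\<in>B. \<gamma> x * ((if fst x ! j = \<omega> then 1 else 0) - (if snd x ! j = \<omega> then 1 else 0))\<bar> < 2 * \<epsilon> * real n" .
    qed
    have "cut_dist n \<mu> \<nu> \<le> (1 / real n) * cut_val n \<gamma>"
      unfolding cut_dist_def
      by (intro mult_left_mono cINF_lower coup bdd_belowI2[where m=0] cut_val_nonneg) auto
    also have "\<dots> < (1 / real n) * (2 * \<epsilon> * real n)" using cutlt npos by (intro mult_strict_left_mono) auto
    also have "\<dots> = 2 * \<epsilon>" using npos by simp
    finally have res: "cut_dist n \<mu> \<nu> < 2 * \<epsilon>" .
    have "\<nu> = (\<lambda>\<sigma>. (1/(\<Sum>h=1..l. msr n \<mu> (S h))) * (\<Sum>i=1..l. msr n \<mu> (S i) *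
               prodm n (\<lambda>j. marg1 n (cond n \<mu> (S i)) j) \<sigma>))"
      unfolding \<nu>_def z_def m_def \<pi>_def ps_def \<mu>c_def ..
    thus "let z = (\<Sum>h=1..l. msr n \<mu> (S h)) in
            cut_dist n \<mu> (\<lambda>\<sigma>. (1/z) * (\<Sum>i=1..l. msr n \<mu> (S i) *
               prodm n (\<lambda>j. marg1 n (cond n \<mu> (S i)) j) \<sigma>)) < 2 * \<epsilon>"
      using res by (simp add: Let_def)
  qed
qed

end
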